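(* Let $N=N_1+N_2$ with $N_1\ge0$, $N_2\ge1$, $N<L$, let $Y=(y_1,\dots,y_{N_2})\in\mathbb Z^{N_2}$ with $-L+N_1+1\le y_1<\cdots<y_{N_2}=0$, let $z_1\ne0$, and let $w_1,\dots,w_N\in\mathcal S_{z_1}$. Then $$\sum_{\tilde Y\in\tilde{\mathcal Y}_{N_1}(L;y_1)}\det\big[w_i^j(w_i+1)^{\tilde y_j-j}1_{j\le N_1}+w_i^j(w_i+1)^{y_{j-N_1}-j}1_{j>N_1}\big]_{i,j=1}^N=\det\big[w_i^{j-1}(w_i+1)^{y_1-N_1}1_{j\le N_1}+w_i^j(w_i+1)^{y_{j-N_1}-j}1_{j>N_1}\big]_{i,j=1}^N.$$
   Context: $\mathcal S_z$ is the set of roots of $w^N(w+1)^{L-N}=z^L$. $\tilde{\mathcal Y}_{N_1}(L;y_1)=\{(\tilde y_1,\dots,\tilde y_{N_1})\in\mathbb Z^{N_1}:-L+1\le\tilde y_1<\cdots<\tilde y_{N_1}\le y_1-1\}$. *)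

theory Defs
  imports Complex_Main "Jordan_Normal_Form.Determinant"
begin

definition S_set :: "nat \<Rightarrow> nat \<Rightarrow> complex \<Rightarrow> complex set" where
  "S_set N L z = {w. w ^ N * (w + 1) ^ (L - N) = z ^ L}"

text \<open>Ytilde_{N1}(L; y1): strictly increasing integer N1-tuples with entries in [-L+1, y1-1],
  represented as lists (entry j, 1-based, is the list element at index j-1).\<close>
definition Ytilde :: "nat \<Rightarrow> nat \<Rightarrow> int \<Rightarrow> int list set" where
  "Ytilde N1 L y1 = {ys. length ys = N1 \<and> sorted_wrt (<) ys \<and>
      (\<forall>y\<in>set ys. - int L + 1 \<le> y \<and> y \<le> y1 - 1)}"

end

theory Submission imports Defs begin

definition Dm :: "nat \<Rightarrow> (nat \<Rightarrow> nat \<Rightarrow> complex) \<Rightarrow> complex" where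
  "Dm n cl = det (mat n n (\<lambda>(i,j). cl j i))"

lemma prod_lin:
  fixes a f h :: "_ \<Rightarrow> complex"
  assumes "finite I" "i0 \<in> I" "finite T"
  shows "(\<Prod>i\<in>I. if i = i0 then (\<Sum>t\<in>T. a t * f t) else h i)
       = (\<Sum>t\<in>T. a t * (\<Prod>i\<in>I. if i = i0 then f t else h i))"
proof -
  have A: "(\<Prod>i\<in>I. if i = i0 then (\<Sum>t\<in>T. a t * f t) else h i)
     = (\<Sum>t\<in>T. a t * f t) * (\<Prod>i\<in>I-{i0}. h i)"
    using assms by (simp add: prod.remove)
  have B: "\<And>t. (\<Prod>i\<in>I. if i = i0 then f t else h i) = f t * (\<Prod>i\<in>I-{i0}. h i)"
    using assms by (simp add: prod.remove)
  show ?thesis unfolding A B by (subst sum_distrib_right) (simp add: mult.assoc)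
qed

lemma Dm_expand:
  "Dm n cl = (\<Sum>p\<in>{p. p permutes {0..<n}}. signof p * (\<Prod>i = 0..<n. cl (p i) i))"
  unfolding Dm_def
  apply (subst det_def'[of _ n], simp)
  apply (rule sum.cong, simp)
  apply (rule arg_cong2[where f="(*)"], simp)
  apply (rule prod.cong, simp)
  apply (subst index_mat, simp, simp add: permutes_in_image)
  apply simp
  done

lemma Dm_lin:
  assumes "finite T" "k < n"
  shows "Dm n (cl(k := (\<lambda>i. \<Sum>t\<in>T. a t * f t i))) = (\<Sum>t\<in>T. a t * Dm n (cl(k := f t)))"
proof -
  have P: "(\<Prod>i = 0..<n. (cl(k := (\<lambda>i. \<Sum>t\<in>T. a t * f t i))) (p i) i)
      = (\<Sum>t\<in>T. a t * (\<Prod>i = 0..<n. (cl(k := f t)) (p i) i))" if p: "p permutes {0..<n}" for p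
  proof -
    define i0 where "i0 = Hilbert_Choice.inv p k"
    have i0: "i0 \<in> {0..<n}" "p i0 = k" using p assms unfolding i0_def
      by (auto simp: permutes_inverses permutes_in_image permutes_inv)
    have eq: "\<And>i. i \<in> {0..<n} \<Longrightarrow> (p i = k) = (i = i0)"
      using i0 p by (metis permutes_inverses(2) i0_def)
    have "(\<Prod>i = 0..<n. (cl(k := (\<lambda>i. \<Sum>t\<in>T. a t * f t i))) (p i) i)
       = (\<Prod>i = 0..<n. if i = i0 then (\<Sum>t\<in>T. a t * f t i0) else cl (p i) i)"
      by (rule prod.cong) (auto simp: eq)
    also have "\<dots> = (\<Sum>t\<in>T. a t * (\<Prod>i = 0..<n. if i = i0 then f t i0 else cl (p i) i))"
      by (rule prod_lin) (use assms i0 in auto)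
    also have "\<dots> = (\<Sum>t\<in>T. a t * (\<Prod>i = 0..<n. (cl(k := f t)) (p i) i))"
      by (intro sum.cong refl arg_cong2[where f="(*)"] prod.cong) (auto simp: eq)
    finally show ?thesis .
  qed
  have "Dm n (cl(k := (\<lambda>i. \<Sum>t\<in>T. a t * f t i)))
     = (\<Sum>p\<in>{p. p permutes {0..<n}}. signof p * (\<Sum>t\<in>T. a t * (\<Prod>i = 0..<n. (cl(k := f t)) (p i) i)))"
    unfolding Dm_expand by (rule sum.cong[OF refl], rule arg_cong2[where f="(*)"], rule refl, rule P, simp)
  also have "\<dots> = (\<Sum>t\<in>T. a t * (\<Sum>p\<in>{p. p permutes {0..<n}}. signof p * (\<Prod>i = 0..<n. (cl(k := f t)) (p i) i)))"
    by (simp add: sum_distrib_left mult.left_commute sum.swap[of _ _ T])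
  also have "\<dots> = (\<Sum>t\<in>T. a t * Dm n (cl(k := f t)))"
    unfolding Dm_expand ..
  finally show ?thesis .
qed

lemma Dm_same:
  assumes "k < n" "k' < n" "k \<noteq> k'" "cl k = cl k'"
  shows "Dm n cl = 0"
  unfolding Dm_def
  by (rule det_identical_columns[of _ n k k']) (use assms in auto)

lemma Dm_cong:
  assumes "\<And>i j. i < n \<Longrightarrow> j < n \<Longrightarrow> cl j i = cl' j i"
  shows "Dm n cl = Dm n cl'"
  unfolding Dm_def by (rule arg_cong[where f=det], rule cong_mat) (use assms in auto)

lemma Dm_prop:
  assumes "k < n" "k' < n" "k \<noteq> k'" "\<And>i. i < n \<Longrightarrow> g i = c * cl k' i"
  shows "Dm n (cl(k := g)) = 0"
proof -
  have "Dm n (cl(k := g)) = Dm n (cl(k := (\<lambda>i. \<Sum>t\<in>{0::nat}. c * cl k' i)))"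
    by (rule Dm_cong) (use assms in auto)
  also have "\<dots> = c * Dm n (cl(k := cl k'))"
    by (subst Dm_lin) (use assms in auto)
  also have "Dm n (cl(k := cl k')) = 0"
    by (rule Dm_same[of k n k']) (use assms in auto)
  then have "c * Dm n (cl(k := cl k')) = 0" by simp
  finally show ?thesis .
qed

lemma sorted_last:
  fixes xs :: "int list"
  shows "sorted_wrt (<) xs \<Longrightarrow> v \<in> set xs \<Longrightarrow> v \<le> last xs"
proof (induction xs)
  case Nil then show ?case by simp
next
  case (Cons x xs)
  show ?case
  proof (cases "xs = []")
    case True then show ?thesis using Cons.prems by simp
  next
    case False
    have l: "last (x # xs) = last xs" using False by simp
    have s: "sorted_wrt (<) xs" and xl: "\<forall>u\<in>set xs. x < u" using Cons.prems(1) by auto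
    have "last xs \<in> set xs" using False by simp
    then have "x < last xs" using xl by blast
    moreover have "v = x \<or> v \<in> set xs" using Cons.prems(2) by simp
    ultimately show ?thesis using Cons.IH[OF s] l by auto
  qed
qed

lemma telesc:
  fixes g :: "int \<Rightarrow> complex"
  assumes "a \<le> b + 1"
  shows "(\<Sum>t\<in>{a..b}. g (t+1) - g t) = g (b+1) - g a"
proof -
  define m where "m = nat (b - a + 1)"
  have m: "b = a - 1 + int m" using assms unfolding m_def by simp
  have "(\<Sum>t\<in>{a..a - 1 + int m}. g (t+1) - g t) = g (a - 1 + int m + 1) - g a" for m
  proof (induction m)
    case 0 then show ?case by simp
  next
    case (Suc m)
    have "{a..a - 1 + int (Suc m)} = insert (a + int m) {a..a - 1 + int m}"
      by (simp add: atLeastAtMost_def atLeast_def atMost_def set_eq_iff) arith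
    then show ?case using Suc by (simp add: algebra_simps)
  qed
  then show ?thesis using m by simp
qed

lemma FG:
  fixes x :: complex
  assumes "x + 1 \<noteq> 0"
  shows "x^(c+1) * (x+1) powi (t - int (c+1))
       = x^c * (x+1) powi ((t+1) - int (c+1)) - x^c * (x+1) powi (t - int (c+1))"
proof -
  have "(x+1) powi ((t+1) - int (c+1)) = (x+1) powi (t - int (c+1)) * (x+1)"
  proof -
    have "(t+1) - int (c+1) = (t - int (c+1)) + 1" by simp
    then show ?thesis using assms power_int_add_1[of "x+1" "t - int (c+1)"] by simp
  qed
  then show ?thesis by (simp add: algebra_simps)
qed

lemma Ssum:
  fixes x :: complex
  assumes "x + 1 \<noteq> 0" "a \<le> b + 1"
  shows "(\<Sum>t\<in>{a..b}. x^(c+1) * (x+1) powi (t - int (c+1)))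
       = x^c * (x+1) powi ((b+1) - int (c+1)) - x^c * (x+1) powi (a - int (c+1))"
  using telesc[OF assms(2), of "\<lambda>s. x^c * (x+1) powi (s - int (c+1))"] FG[OF assms(1)]
  by simp

lemma Sprop:
  fixes x z :: complex
  assumes "x ^ n * (x + 1) ^ (L - n) = z ^ L" "z \<noteq> 0" "n < L" "n \<ge> 1"
  shows "x + 1 \<noteq> 0" "(x+1) powi (- int L) = inverse (z^L) * (x^n * (x+1) powi (- int n))"
proof -
  show x1: "x + 1 \<noteq> 0"
  proof
    assume "x + 1 = 0"
    then have "z ^ L = 0" using assms(1,3) by (metis mult_zero_right zero_less_diff zero_power)
    then show False using assms(2) by simp
  qed
  have x0: "x \<noteq> 0"
  proof
    assume "x = 0"
    then have "z ^ L = 0" using assms(1,4) by (simp add: power_0_left)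
    then show False using assms(2) by simp
  qed
  have e: "(x + 1) ^ (L - n) = (x+1) powi (int L - int n)"
    using assms(3) by (simp add: power_int_of_nat[symmetric] of_nat_diff)
  have "(x+1) powi (- int L) * (x+1) powi (int L - int n) = (x+1) powi (- int n)"
    using x1 by (simp add: power_int_add[symmetric])
  then show "(x+1) powi (- int L) = inverse (z^L) * (x^n * (x+1) powi (- int n))"
    unfolding assms(1)[symmetric] e using x1 x0
    by (simp add: field_simps power_int_not_zero)
qed



theorem lemma11p8:
  fixes N1 N2 L :: nat and y :: "nat \<Rightarrow> int" and z1 :: complex and w :: "nat \<Rightarrow> complex"
  assumes "N2 \<ge> 1" and "N1 + N2 < L"
    and "- int L + int N1 + 1 \<le> y 1"
    and "\<And>a b. 1 \<le> a \<Longrightarrow> a < b \<Longrightarrow> b \<le> N2 \<Longrightarrow> y a < y b"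
    and "y N2 = 0"
    and "z1 \<noteq> 0"
    and "\<And>i. 1 \<le> i \<Longrightarrow> i \<le> N1 + N2 \<Longrightarrow> w i \<in> S_set (N1 + N2) L z1"
  shows "(\<Sum>ys\<in>Ytilde N1 L (y 1).
           det (mat (N1 + N2) (N1 + N2) (\<lambda>(i, j).
             (if j + 1 \<le> N1
              then w (i + 1) ^ (j + 1) * (w (i + 1) + 1) powi (ys ! j - int (j + 1))
              else w (i + 1) ^ (j + 1) * (w (i + 1) + 1) powi (y (j + 1 - N1) - int (j + 1))))))
       = det (mat (N1 + N2) (N1 + N2) (\<lambda>(i, j).
             (if j + 1 \<le> N1
              then w (i + 1) ^ j * (w (i + 1) + 1) powi (y 1 - int N1)
              else w (i + 1) ^ (j + 1) * (w (i + 1) + 1) powi (y (j + 1 - N1) - int (j + 1)))))"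
proof -
  define n where "n = N1 + N2"
  define W where "W i = w (i+1)" for i
  define F where "F c t i = W i ^ (c+1) * (W i + 1) powi (t - int (c+1))" for c :: nat and t :: int and i
  define G where "G c s i = W i ^ c * (W i + 1) powi (s - int (c+1))" for c :: nat and s :: int and i
  define R where "R c i = W i ^ (c+1) * (W i + 1) powi (y (c+1-N1) - int (c+1))" for c i
  define A where "A = - int L + 1"
  define U where "U k = y 1 - 1 - int N1 + int k" for k :: nat
  define Yk where "Yk k = {ys. length ys = k \<and> sorted_wrt (<) ys \<and> (\<forall>v\<in>set ys. A \<le> v \<and> v \<le> U k)}" for k
  define colk where "colk k ys = (\<lambda>c. if c < k then F c (ys!c) else if c < N1 then G c (y 1 - int N1 + int c + 1) else R c)" for k ys
  have Wp: "W i + 1 \<noteq> 0" "(W i + 1) powi (- int L) = inverse (z1^L) * (W i^n * (W i + 1) powi (- int n))" if "i < n" for i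
    using Sprop[of "W i" n L z1] assms(7)[of "i+1"] that assms(1,2,6) unfolding W_def S_set_def n_def by auto
  have finY: "finite (Yk k)" for k
  proof -
    have "Yk k \<subseteq> {ys. set ys \<subseteq> {A..U k} \<and> length ys = k}" unfolding Yk_def by auto
    then show ?thesis using finite_lists_length_eq[of "{A..U k}" k] finite_subset by blast
  qed
  have step: "(\<Sum>ys\<in>Yk (Suc k). Dm n (colk (Suc k) ys)) = (\<Sum>xs\<in>Yk k. Dm n (colk k xs))" if k: "k < N1" for k
  proof -
    define lo where "lo xs = (if xs = [] then A else last xs + 1)" for xs
    have img: "Yk (Suc k) = (\<lambda>(xs,t). xs @ [t]) ` (SIGMA xs:Yk k. {lo xs..U (Suc k)})"
    proof (intro equalityI subsetI)
      fix ys assume ys: "ys \<in> Yk (Suc k)"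
      then have ne: "ys \<noteq> []" unfolding Yk_def by auto
      define xs where "xs = butlast ys"
      define t where "t = last ys"
      have yx: "ys = xs @ [t]" using ne unfolding xs_def t_def by simp
      have sy: "sorted_wrt (<) (xs @ [t])" using ys yx unfolding Yk_def by simp
      then have lt: "\<forall>v\<in>set xs. v < t" and sx: "sorted_wrt (<) xs" by (auto simp: sorted_wrt_append)
      have bd: "\<forall>v\<in>set (xs@[t]). A \<le> v \<and> v \<le> U (Suc k)" using ys yx unfolding Yk_def by simp
      have "xs \<in> Yk k" unfolding Yk_def using ys yx sx lt bd by (auto simp: Yk_def U_def)
      moreover have "t \<in> {lo xs..U (Suc k)}"
      proof (cases "xs = []")
        case False
        then have "last xs < t" using lt last_in_set[of xs] by blast
        then show ?thesis using bd False by (simp add: lo_def)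
      qed (use bd in \<open>simp add: lo_def\<close>)
      ultimately show "ys \<in> (\<lambda>(xs,t). xs @ [t]) ` (SIGMA xs:Yk k. {lo xs..U (Suc k)})"
        using yx by force
    next
      fix ys assume "ys \<in> (\<lambda>(xs,t). xs @ [t]) ` (SIGMA xs:Yk k. {lo xs..U (Suc k)})"
      then obtain xs t where xs: "xs \<in> Yk k" and t: "t \<in> {lo xs..U (Suc k)}" and yx: "ys = xs @ [t]" by auto
      have lt: "\<forall>v\<in>set xs. v < t"
      proof
        fix v assume v: "v \<in> set xs"
        then have "v \<le> last xs" using sorted_last[of xs v] xs unfolding Yk_def by auto
        moreover have "last xs + 1 \<le> t" using t v by (auto simp: lo_def split: if_splits)
        ultimately show "v < t" by simp
      qed
      have tA: "A \<le> t"
      proof (cases "xs = []")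
        case True then show ?thesis using t by (simp add: lo_def)
      next
        case False
        then have "A \<le> last xs" using xs unfolding Yk_def by auto
        then show ?thesis using t False by (simp add: lo_def)
      qed
      show "ys \<in> Yk (Suc k)" using xs t lt tA unfolding yx Yk_def
        by (auto simp: sorted_wrt_append U_def)
    qed
    have inj: "inj_on (\<lambda>(xs,t). xs @ [t]) (SIGMA xs:Yk k. {lo xs..U (Suc k)})"
      by (auto simp: inj_on_def)
    have "(\<Sum>ys\<in>Yk (Suc k). Dm n (colk (Suc k) ys))
        = (\<Sum>(xs,t)\<in>(SIGMA xs:Yk k. {lo xs..U (Suc k)}). Dm n (colk (Suc k) (xs @ [t])))"
      unfolding img by (subst sum.reindex[OF inj]) (simp add: comp_def case_prod_unfold)
    also have "\<dots> = (\<Sum>xs\<in>Yk k. \<Sum>t\<in>{lo xs..U (Suc k)}. Dm n (colk (Suc k) (xs @ [t])))"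
      by (rule sum.Sigma[symmetric]) (auto simp: finY)
    also have "\<dots> = (\<Sum>xs\<in>Yk k. Dm n (colk k xs))"
    proof (rule sum.cong[OF refl])
      fix xs assume xs: "xs \<in> Yk k"
      have len: "length xs = k" using xs Yk_def by auto
      have kn: "k < n" using k n_def by simp
      have upd: "colk (Suc k) (xs @ [t]) = (colk k xs)(k := F k t)" for t
        using len k by (auto simp: colk_def fun_eq_iff nth_append)
      have lohi: "lo xs \<le> U (Suc k) + 1"
      proof (cases "xs = []")
        case True then show ?thesis using assms(3) by (simp add: lo_def A_def U_def)
      next
        case False
        then have "last xs \<le> U k" using xs unfolding Yk_def by auto
        then show ?thesis using False by (simp add: lo_def U_def)
      qed
      have "(\<Sum>t\<in>{lo xs..U (Suc k)}. Dm n (colk (Suc k) (xs @ [t])))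
          = (\<Sum>t\<in>{lo xs..U (Suc k)}. 1 * Dm n ((colk k xs)(k := F k t)))"
        unfolding upd by simp
      also have "\<dots> = Dm n ((colk k xs)(k := (\<lambda>i. \<Sum>t\<in>{lo xs..U (Suc k)}. 1 * F k t i)))"
        by (rule Dm_lin[symmetric]) (auto simp: kn)
      also have "\<dots> = Dm n ((colk k xs)(k := (\<lambda>i. \<Sum>b\<in>{0::nat,1}. (if b = 0 then 1 else -1) *
                 (if b = 0 then G k (U (Suc k) + 1) i else G k (lo xs) i))))"
      proof (rule Dm_cong)
        fix i j assume i: "i < n" and j: "j < n"
        show "((colk k xs)(k := (\<lambda>i. \<Sum>t\<in>{lo xs..U (Suc k)}. 1 * F k t i))) j i =
           ((colk k xs)(k := (\<lambda>i. \<Sum>b\<in>{0::nat,1}. (if b = 0 then 1 else -1) *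
                 (if b = 0 then G k (U (Suc k) + 1) i else G k (lo xs) i)))) j i"
          using Ssum[OF Wp(1)[OF i] lohi, of k] by (simp add: F_def G_def)
      qed
      also have "\<dots> = 1 * Dm n ((colk k xs)(k := G k (U (Suc k) + 1))) + (-1) * Dm n ((colk k xs)(k := G k (lo xs)))"
        by (subst Dm_lin) (auto simp: kn)
      also have "(colk k xs)(k := G k (U (Suc k) + 1)) = colk k xs"
      proof -
        have "U (Suc k) + 1 = y 1 - int N1 + int k + 1" by (simp add: U_def)
        then show ?thesis using k by (auto simp: colk_def fun_eq_iff)
      qed
      also have "Dm n ((colk k xs)(k := G k (lo xs))) = 0"
      proof (cases "xs = []")
        case True
        then have k0: "k = 0" using len by simp
        show ?thesis
        proof (rule Dm_prop[where k'="n-1" and c="inverse (z1^L)"])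
          show "k < n" "n - 1 < n" "k \<noteq> n - 1" using kn k assms(1) n_def by auto
          fix i assume i: "i < n"
          have "colk k xs (n-1) i = R (n-1) i" proof -
            have "\<not> n - 1 < N1" "\<not> n - 1 < k" using k k0 assms(1) n_def by auto
            then show ?thesis by (simp add: colk_def)
          qed
          also have "\<dots> = W i ^ n * (W i + 1) powi (- int n)"
            using assms(1,5) by (simp add: R_def n_def)
          finally show "G k (lo xs) i = inverse (z1^L) * colk k xs (n-1) i"
            using Wp(2)[OF i] True k0 by (simp add: G_def lo_def A_def)
        qed
      next
        case False
        then obtain k' where k': "k = Suc k'" using len by (cases k) auto
        have lx: "last xs = xs ! k'" using False len k' by (simp add: last_conv_nth)
        show ?thesis
        proof (rule Dm_prop[where k'="k'" and c=1])
          show "k < n" "k' < n" "k \<noteq> k'" using kn k' by auto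
          fix i assume i: "i < n"
          show "G k (lo xs) i = 1 * colk k xs k' i"
            using False k' k lx by (simp add: colk_def G_def F_def lo_def algebra_simps)
        qed
      qed
      finally show "(\<Sum>t\<in>{lo xs..U (Suc k)}. Dm n (colk (Suc k) (xs @ [t]))) = Dm n (colk k xs)"
        by simp
    qed
    finally show ?thesis .
  qed
  have Y0: "Yk 0 = {[]}" unfolding Yk_def by auto
  have main: "k \<le> N1 \<Longrightarrow> (\<Sum>ys\<in>Yk k. Dm n (colk k ys)) = Dm n (colk 0 [])" for k
  proof (induction k)
    case 0 then show ?case by (simp add: Y0)
  next
    case (Suc k) then show ?case using step[of k] by simp
  qed
  have YY: "Ytilde N1 L (y 1) = Yk N1" unfolding Ytilde_def Yk_def A_def U_def by auto
  have lhs: "det (mat (N1 + N2) (N1 + N2) (\<lambda>(i, j).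
             (if j + 1 \<le> N1
              then w (i + 1) ^ (j + 1) * (w (i + 1) + 1) powi (ys ! j - int (j + 1))
              else w (i + 1) ^ (j + 1) * (w (i + 1) + 1) powi (y (j + 1 - N1) - int (j + 1)))))
         = Dm n (colk N1 ys)" for ys
    unfolding Dm_def n_def
    by (rule arg_cong[where f=det], rule cong_mat) (auto simp: colk_def F_def R_def W_def)
  have rhs: "det (mat (N1 + N2) (N1 + N2) (\<lambda>(i, j).
             (if j + 1 \<le> N1
              then w (i + 1) ^ j * (w (i + 1) + 1) powi (y 1 - int N1)
              else w (i + 1) ^ (j + 1) * (w (i + 1) + 1) powi (y (j + 1 - N1) - int (j + 1)))))
         = Dm n (colk 0 [])"
    unfolding Dm_def n_def
    by (rule arg_cong[where f=det], rule cong_mat) (auto simp: colk_def G_def R_def W_def)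
  show ?thesis unfolding lhs rhs YY using main[of N1] by simp
qed

end
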